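(* For each $s=1,2,\dots$, let $B_s$ be the set of indices selected at exploration round $s$ and $\mathbf{q}_s$ the associated probability vector. Then $$\forall i\in[d],\quad\mathbb{P}[i\in B_s]=\frac{d-k}{d-1}q_{s,i}+\frac{k-1}{d-1},$$ $$\forall i\ne j\in[d],\quad\mathbb{P}[i,j\in B_s]=\frac1{g_{d,k}}+\frac{d-k}{(k-2)g_{d,k}}(q_{s,i}+q_{s,j}),$$ $$\forall\text{ pairwise distinct }i,j,r\in[d],\quad\mathbb{P}[i,j,r\in B_s]=\frac1{g_{d,k}}\cdot\frac{k-3}{d-3}+\frac1{g_{d,k}}\cdot\frac{d-k}{d-3}(q_{s,i}+q_{s,j}+q_{s,r}).$$ Moreover, $\mathbb{E}_s[\hat{\mathbf{x}}_{s^2}]=\mathbf{x}_{s^2}$ and $\mathbb{E}_s[\mathbf{h}_{s^2}]=\mathbf{x}_{s^2}\mathbf{x}_{s^2}^\top$, where $\mathbb{E}_s[\cdot]=\mathbb{E}[\cdot\mid B_1,\dots,B_{s-1}]$ is taken with respect to $B_s$.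
   Context: Integers $3\le k\le d-3$, $[d]=\{1,\dots,d\}$, $g_{d,k}=\frac{(d-1)(d-2)}{(k-1)(k-2)}$. SAMPLING$(k,d,\mathbf{w})$ for nonzero $\mathbf{w}\in\mathbb{R}^d$: with $q_i=|w_i|/\|\mathbf{w}\|_1$, draw $I_1\in[d]$ with $\mathbb{P}(I_1=i)=q_i$, then $k-1$ distinct indices uniformly without replacement from $[d]\setminus\{I_1\}$; output the $k$-set $B$. At exploration round $s$ a nonzero vector $\hat{\mathbf{w}}_{s-1}\in\mathbb{R}^d$ determined by $B_1,\dots,B_{s-1}$ is given ($\hat{\mathbf{w}}_0=\frac1d\mathbf{1}_d$), $q_{s,i}=|\hat w_{s-1,i}|/\|\hat{\mathbf{w}}_{s-1}\|_1$ and $B_s=$SAMPLING$(k,d,\hat{\mathbf{w}}_{s-1})$; all probabilities are over $B_s$ conditional on $B_1,\dots,B_{s-1}$. An instance $\mathbf{x}_{s^2}\in\mathbb{R}^d$ (fixed given the past) is observed on $B_s$ and $\hat x_{s^2,i}=\frac{x_{s^2,i}}{\mathbb{P}[i\in B_s]}\mathbb{I}_{i\in B_s}$, $h_{s^2}[i,i]=\frac{x_{s^2,i}^2}{\mathbb{P}[i\in B_s]}\mathbb{I}_{i\in B_s}$, $h_{s^2}[i,j]=\frac{x_{s^2,i}x_{s^2,j}}{\mathbb{P}[i,j\in B_s]}\mathbb{I}_{i,j\in B_s}$ for $i\ne j$. *)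

theory Defs
  imports "HOL-Probability.Probability"
begin

(* Vectors in R^d are modelled as functions nat => real; only indices in {1..d} matter. *)

definition qprob :: "nat \<Rightarrow> (nat \<Rightarrow> real) \<Rightarrow> nat \<Rightarrow> real" where
  "qprob d w i = (if i \<in> {1..d} then \<bar>w i\<bar> / (\<Sum>j\<in>{1..d}. \<bar>w j\<bar>) else 0)"

definition gdk :: "nat \<Rightarrow> nat \<Rightarrow> real" where
  "gdk d k = ((real d - 1) * (real d - 2)) / ((real k - 1) * (real k - 2))"

definition sampling :: "nat \<Rightarrow> nat \<Rightarrow> (nat \<Rightarrow> real) \<Rightarrow> nat set pmf" where
  "sampling k d w =
     bind_pmf (embed_pmf (qprob d w))
       (\<lambda>i. map_pmf (insert i)
              (pmf_of_set {S. S \<subseteq> {1..d} - {i} \<and> card S = k - 1}))"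

definition xhat :: "nat set pmf \<Rightarrow> (nat \<Rightarrow> real) \<Rightarrow> nat set \<Rightarrow> nat \<Rightarrow> real" where
  "xhat P x B i = (if i \<in> B then x i / measure_pmf.prob P {C. i \<in> C} else 0)"

definition hmat :: "nat set pmf \<Rightarrow> (nat \<Rightarrow> real) \<Rightarrow> nat set \<Rightarrow> nat \<Rightarrow> nat \<Rightarrow> real" where
  "hmat P x B i j =
     (if i = j then (if i \<in> B then x i ^ 2 / measure_pmf.prob P {C. i \<in> C} else 0)
      else (if i \<in> B \<and> j \<in> B then x i * x j / measure_pmf.prob P {C. i \<in> C \<and> j \<in> C} else 0))"

end

theory Submission
  imports Defs
begin

lemma ind: fixes P :: "'a pmf" shows "measure_pmf.expectation P (\<lambda>B. indicator A B * c) = measure P A * (c::real)"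
  by simp

lemma binom_ratio:
  fixes n m t :: nat
  assumes "t \<le> m" "m \<le> n"
  shows "real ((n - t) choose (m - t)) * (\<Prod>i<t. real n - real i)
       = real (n choose m) * (\<Prod>i<t. real m - real i)"
  using assms
proof (induction t)
  case 0 then show ?case by simp
next
  case (Suc t)
  have IH: "real ((n - t) choose (m - t)) * (\<Prod>i<t. real n - real i)
       = real (n choose m) * (\<Prod>i<t. real m - real i)" using Suc by simp
  have h: "(m - t) * ((n - t) choose (m - t)) = (n - t) * ((n - t - 1) choose (m - t - 1))"
    using Suc.prems by (intro times_binomial_minus1_eq) auto
  have q: "n - t - 1 = n - Suc t" "m - t - 1 = m - Suc t" by simp_all
  have "(m - t) * ((n - t) choose (m - t)) = (n - t) * ((n - Suc t) choose (m - Suc t))"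
    using h unfolding q .
  then have e: "real (m - t) * real ((n - t) choose (m - t)) = real (n - t) * real ((n - Suc t) choose (m - Suc t))"
    by (metis of_nat_mult)
  have r1: "real (m - t) = real m - real t" "real (n - t) = real n - real t" using Suc.prems by auto
  have "real ((n - Suc t) choose (m - Suc t)) * (\<Prod>i<Suc t. real n - real i)
      = (real (n - t) * real ((n - Suc t) choose (m - Suc t))) * (\<Prod>i<t. real n - real i)"
    by (simp add: r1 algebra_simps)
  also have "\<dots> = real (m - t) * (real ((n - t) choose (m - t)) * (\<Prod>i<t. real n - real i))"
    using e by simp
  also have "\<dots> = real (n choose m) * (\<Prod>i<Suc t. real m - real i)"
    by (simp add: IH r1 algebra_simps)
  finally show ?case .
qed

lemma card_supsets:
  assumes "finite A" "T \<subseteq> A" "card T \<le> m"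
  shows "card {S. S \<subseteq> A \<and> card S = m \<and> T \<subseteq> S} = (card A - card T) choose (m - card T)"
proof -
  have fT: "finite T" using assms finite_subset by blast
  have eq: "{S. S \<subseteq> A \<and> card S = m \<and> T \<subseteq> S} = (\<lambda>U. U \<union> T) ` {U. U \<subseteq> A - T \<and> card U = m - card T}"
  proof (intro set_eqI iffI)
    fix S assume S: "S \<in> {S. S \<subseteq> A \<and> card S = m \<and> T \<subseteq> S}"
    have "finite S" using S assms finite_subset by blast
    hence "card (S - T) = m - card T" using S by (simp add: card_Diff_subset fT)
    moreover have "S = (S - T) \<union> T" using S by auto
    ultimately show "S \<in> (\<lambda>U. U \<union> T) ` {U. U \<subseteq> A - T \<and> card U = m - card T}"
      using S by blast
  next
    fix S assume "S \<in> (\<lambda>U. U \<union> T) ` {U. U \<subseteq> A - T \<and> card U = m - card T}"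
    then obtain U where U: "U \<subseteq> A - T" "card U = m - card T" "S = U \<union> T" by blast
    have "finite U" using U assms finite_subset by blast
    hence "card S = m" using U fT assms(3) by (simp add: card_Un_disjoint Int_commute disjoint_iff) (metis Diff_iff card_Un_disjoint disjoint_iff fT le_add_diff_inverse2 subsetD)
    then show "S \<in> {S. S \<subseteq> A \<and> card S = m \<and> T \<subseteq> S}" using U assms by auto
  qed
  have inj: "inj_on (\<lambda>U. U \<union> T) {U. U \<subseteq> A - T \<and> card U = m - card T}"
    by (rule inj_onI) blast
  have "card {S. S \<subseteq> A \<and> card S = m \<and> T \<subseteq> S} = card {U. U \<subseteq> A - T \<and> card U = m - card T}"
    unfolding eq by (rule card_image[OF inj])
  also have "\<dots> = card (A - T) choose (m - card T)"
    using assms by (intro n_subsets) auto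
  finally show ?thesis using assms fT by (simp add: card_Diff_subset)
qed

lemma prob_contains:
  assumes "finite A" "T \<subseteq> A" "m \<le> card A"
  shows "measure (pmf_of_set {S. S \<subseteq> A \<and> card S = m}) {S. T \<subseteq> S}
       = (\<Prod>i<card T. (real m - real i) / (real (card A) - real i))"
proof -
  define F where "F = {S. S \<subseteq> A \<and> card S = m}"
  have finF: "finite F" unfolding F_def using assms(1)
    by (rule finite_subset[rotated, OF finite_Pow_iff[THEN iffD2]]) auto
  have cF: "card F = card A choose m" unfolding F_def using assms by (intro n_subsets) auto
  have neF: "F \<noteq> {}" using cF assms(3) by (metis card.empty zero_less_binomial_iff less_irrefl)
  have int: "F \<inter> {S. T \<subseteq> S} = {S. S \<subseteq> A \<and> card S = m \<and> T \<subseteq> S}" unfolding F_def by auto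
  have meas: "measure (pmf_of_set F) {S. T \<subseteq> S} = real (card {S. S \<subseteq> A \<and> card S = m \<and> T \<subseteq> S}) / real (card A choose m)"
    using measure_pmf_of_set[OF neF finF] int cF by simp
  show ?thesis
  proof (cases "card T \<le> m")
    case True
    have c: "card {S. S \<subseteq> A \<and> card S = m \<and> T \<subseteq> S} = (card A - card T) choose (m - card T)"
      using card_supsets[OF assms(1,2) True] .
    have br: "real ((card A - card T) choose (m - card T)) * (\<Prod>i<card T. real (card A) - real i)
       = real (card A choose m) * (\<Prod>i<card T. real m - real i)"
      using binom_ratio[OF True assms(3)] .
    have pn: "(\<Prod>i<card T. real (card A) - real i) \<noteq> 0"
      using True assms(3) by (auto simp: prod_zero_iff)
    have bn: "real (card A choose m) \<noteq> 0" using assms(3) by simp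
    have "(\<Prod>i<card T. (real m - real i) / (real (card A) - real i))
        = (\<Prod>i<card T. real m - real i) / (\<Prod>i<card T. real (card A) - real i)"
      by (simp add: prod_dividef)
    also have "\<dots> = real ((card A - card T) choose (m - card T)) / real (card A choose m)"
      using br pn bn by (simp add: field_simps)
    finally show ?thesis unfolding F_def[symmetric] meas c by simp
  next
    case False
    have e: "{S. S \<subseteq> A \<and> card S = m \<and> T \<subseteq> S} = {}"
    proof (rule ccontr)
      assume "{S. S \<subseteq> A \<and> card S = m \<and> T \<subseteq> S} \<noteq> {}"
      then obtain S where S: "S \<subseteq> A" "card S = m" "T \<subseteq> S" by blast
      have "finite S" using S assms(1) finite_subset by blast
      then have "card T \<le> card S" using S card_mono by blast
      then show False using S False by simp
    qed
    have "(\<Prod>i<card T. (real m - real i) / (real (card A) - real i)) = 0"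
      using False by (intro prod_zero) (auto intro!: bexI[of _ m])
    then show ?thesis unfolding F_def[symmetric] meas e by simp
  qed
qed

lemma measure_bind_finite:
  assumes "finite A" "set_pmf M \<subseteq> A"
  shows "measure (bind_pmf M N) X = (\<Sum>a\<in>A. pmf M a * measure (N a) X)"
proof -
  have "emeasure (bind_pmf M N) X = (\<integral>\<^sup>+x. emeasure (N x) X \<partial>M)" by simp
  also have "\<dots> = (\<Sum>a\<in>A. emeasure (N a) X * pmf M a)"
    using assms by (intro nn_integral_measure_pmf_support) auto
  also have "\<dots> = ennreal (\<Sum>a\<in>A. pmf M a * measure (N a) X)"
    by (simp add: measure_pmf.emeasure_eq_measure ennreal_mult'' sum_ennreal[symmetric] mult.commute)
  finally have "ennreal (measure (bind_pmf M N) X) = ennreal (\<Sum>a\<in>A. pmf M a * measure (N a) X)"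
    by (simp add: measure_pmf.emeasure_eq_measure)
  then show ?thesis
    by (rule ennreal_inj[THEN iffD1, rotated 2]) (auto intro!: sum_nonneg)
qed
lemma a1: fixes D K q :: real assumes "D \<noteq> 0"
  shows "(D - K) / D * q + K / D = 1 * q + K / D * (1 - q)"
  using assms by (simp add: field_simps)
lemma a2: fixes D1 D2 K1 K2 a :: real assumes "D1 \<noteq> 0" "D2 \<noteq> 0" "K1 \<noteq> 0" "K2 \<noteq> 0"
  shows "1 / ((D1 * D2) / (K1 * K2)) + (D2 - K2) / (K2 * ((D1 * D2) / (K1 * K2))) * a
   = K1 / D1 * a + K1 / D1 * (K2 / D2) * (1 - a)"
  using assms by (simp add: field_simps)
lemma a3: fixes D1 D2 D3 K1 K2 K3 a :: real assumes "D1 \<noteq> 0" "D2 \<noteq> 0" "D3 \<noteq> 0" "K1 \<noteq> 0" "K2 \<noteq> 0"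
  shows "1 / ((D1 * D2) / (K1 * K2)) * (K3 / D3)
     + 1 / ((D1 * D2) / (K1 * K2)) * ((D3 - K3) / D3) * a
   = K1 / D1 * (K2 / D2) * a + K1 / D1 * (K2 / D2) * (K3 / D3) * (1 - a)"
  using assms by (simp add: field_simps)

theorem lemma9:
  fixes k d :: nat and w x :: "nat \<Rightarrow> real"
  assumes "3 \<le> k" and "k + 3 \<le> d"
    and "\<exists>i\<in>{1..d}. w i \<noteq> 0"
  defines "P \<equiv> sampling k d w"
  shows
    "(\<forall>i\<in>{1..d}. measure_pmf.prob P {B. i \<in> B}
        = (real d - real k) / (real d - 1) * qprob d w i + (real k - 1) / (real d - 1))
     \<and> (\<forall>i\<in>{1..d}. \<forall>j\<in>{1..d}. i \<noteq> j \<longrightarrow>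
        measure_pmf.prob P {B. i \<in> B \<and> j \<in> B}
        = 1 / gdk d k + (real d - real k) / ((real k - 2) * gdk d k) * (qprob d w i + qprob d w j))
     \<and> (\<forall>i\<in>{1..d}. \<forall>j\<in>{1..d}. \<forall>r\<in>{1..d}. i \<noteq> j \<and> i \<noteq> r \<and> j \<noteq> r \<longrightarrow>
        measure_pmf.prob P {B. i \<in> B \<and> j \<in> B \<and> r \<in> B}
        = 1 / gdk d k * ((real k - 3) / (real d - 3))
          + 1 / gdk d k * ((real d - real k) / (real d - 3)) * (qprob d w i + qprob d w j + qprob d w r))
     \<and> (\<forall>i\<in>{1..d}. measure_pmf.expectation P (\<lambda>B. xhat P x B i) = x i)
     \<and> (\<forall>i\<in>{1..d}. \<forall>j\<in>{1..d}. measure_pmf.expectation P (\<lambda>B. hmat P x B i j) = x i * x j)"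
proof -
  define Q where "Q = qprob d w"
  define F where "F = (\<lambda>l. {S. S \<subseteq> {1..d} - {l} \<and> card S = k - 1})"
  define \<rho> where "\<rho> = (\<lambda>t::nat. \<Prod>i<t. (real (k - 1) - real i) / (real (d - 1) - real i))"
  obtain i0 where i0: "i0 \<in> {1..d}" "w i0 \<noteq> 0" using assms(3) by blast
  have Spos: "(\<Sum>j\<in>{1..d}. \<bar>w j\<bar>) > 0"
    by (rule sum_pos2[OF _ i0(1)]) (use i0 in auto)
  have Qnn: "\<And>l. 0 \<le> Q l" unfolding Q_def qprob_def using Spos by auto
  have Q0: "\<And>l. l \<notin> {1..d} \<Longrightarrow> Q l = 0" unfolding Q_def qprob_def by auto
  have Qsum: "(\<Sum>l\<in>{1..d}. Q l) = 1"
  proof -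
    have "(\<Sum>l\<in>{1..d}. Q l) = (\<Sum>l\<in>{1..d}. \<bar>w l\<bar> / (\<Sum>j\<in>{1..d}. \<bar>w j\<bar>))"
      unfolding Q_def qprob_def by (intro sum.cong) auto
    also have "\<dots> = 1" using Spos by (simp add: sum_divide_distrib[symmetric])
    finally show ?thesis .
  qed
  have int1: "(\<integral>\<^sup>+l. ennreal (Q l) \<partial>count_space UNIV) = 1"
  proof -
    have "(\<integral>\<^sup>+l. ennreal (Q l) \<partial>count_space UNIV) = (\<Sum>l\<in>{1..d}. ennreal (Q l))"
      by (rule nn_integral_count_space') (auto simp: Q0)
    also have "\<dots> = ennreal (\<Sum>l\<in>{1..d}. Q l)" using Qnn by (simp add: sum_ennreal)
    finally show ?thesis using Qsum by simp
  qed
  have pmfE: "\<And>l. pmf (embed_pmf Q) l = Q l"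
    by (rule pmf_embed_pmf) (use Qnn int1 in auto)
  have setE: "set_pmf (embed_pmf Q) \<subseteq> {1..d}"
  proof -
    have "set_pmf (embed_pmf Q) = {x. Q x \<noteq> 0}" by (rule set_embed_pmf) (use Qnn int1 in auto)
    then show ?thesis using Q0 by blast
  qed
  have Peq: "P = bind_pmf (embed_pmf Q) (\<lambda>l. map_pmf (insert l) (pmf_of_set (F l)))"
    unfolding P_def sampling_def Q_def F_def ..
  have kd1: "real (k - 1) = real k - 1" "real (d - 1) = real d - 1"
     "real (k - Suc 0) = real k - 1" "real (d - Suc 0) = real d - 1" using assms by auto
  have key: "measure P {B. T \<subseteq> B} = \<rho> (card T - 1) * sum Q T + \<rho> (card T) * (1 - sum Q T)"
    if T: "T \<subseteq> {1..d}" "T \<noteq> {}" for T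
  proof -
    have fT: "finite T" using T finite_subset by blast
    have "measure P {B. T \<subseteq> B}
       = (\<Sum>l\<in>{1..d}. Q l * measure (pmf_of_set (F l)) (insert l -` {B. T \<subseteq> B}))"
      unfolding Peq by (subst measure_bind_finite[OF _ setE]) (auto simp: pmfE)
    also have "\<dots> = (\<Sum>l\<in>{1..d}. Q l * \<rho> (card (T - {l})))"
    proof (intro sum.cong refl)
      fix l assume l: "l \<in> {1..d}"
      have pre: "insert l -` {B. T \<subseteq> B} = {S. T - {l} \<subseteq> S}" by auto
      have cA: "card ({1..d} - {l}) = d - 1" using l by simp
      have "measure (pmf_of_set (F l)) {S. T - {l} \<subseteq> S} = \<rho> (card (T - {l}))"
      proof -
        have "measure (pmf_of_set {S. S \<subseteq> {1..d} - {l} \<and> card S = k - 1}) {S. T - {l} \<subseteq> S}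
           = (\<Prod>i<card (T - {l}). (real (k - 1) - real i) / (real (card ({1..d} - {l})) - real i))"
          by (rule prob_contains) (use T assms(2) cA in auto)
        then show ?thesis unfolding F_def \<rho>_def cA .
      qed
      then show "Q l * measure (pmf_of_set (F l)) (insert l -` {B. T \<subseteq> B}) = Q l * \<rho> (card (T - {l}))"
        by (simp only: pre)
    qed
    also have "\<dots> = (\<Sum>l\<in>{1..d} - T. Q l * \<rho> (card (T - {l}))) + (\<Sum>l\<in>T. Q l * \<rho> (card (T - {l})))"
      using T by (intro sum.subset_diff) auto
    also have "(\<Sum>l\<in>{1..d} - T. Q l * \<rho> (card (T - {l}))) = (\<Sum>l\<in>{1..d} - T. Q l) * \<rho> (card T)"
      by (simp add: sum_distrib_right)
    also have "(\<Sum>l\<in>T. Q l * \<rho> (card (T - {l}))) = sum Q T * \<rho> (card T - 1)"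
      using fT by (simp add: sum_distrib_right)
    also have "(\<Sum>l\<in>{1..d} - T. Q l) = 1 - sum Q T"
      using T Qsum by (simp add: sum_diff)
    finally show ?thesis by (simp add: algebra_simps)
  qed
  have r0: "\<rho> 0 = 1" by (simp add: \<rho>_def)
  have r1: "\<rho> 1 = (real k - 1) / (real d - 1)" by (simp add: \<rho>_def kd1)
  have r2: "\<rho> 2 = (real k - 1) / (real d - 1) * ((real k - 2) / (real d - 2))"
    by (simp add: \<rho>_def kd1 numeral_eq_Suc)
  have r3: "\<rho> 3 = (real k - 1) / (real d - 1) * ((real k - 2) / (real d - 2)) * ((real k - 3) / (real d - 3))"
    by (simp add: \<rho>_def kd1 numeral_eq_Suc)
  have dk: "real d - 1 > 0" "real d - 2 > 0" "real d - 3 > 0" "real k - 1 > 0" "real k - 2 > 0" "real k \<le> real d"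
    using assms(1,2) by auto
  have gdk: "gdk d k = ((real d - 1) * (real d - 2)) / ((real k - 1) * (real k - 2))" by (simp add: gdk_def)
  have part1: "\<forall>i\<in>{1..d}. measure_pmf.prob P {B. i \<in> B}
        = (real d - real k) / (real d - 1) * qprob d w i + (real k - 1) / (real d - 1)"
  proof
    fix i assume i: "i \<in> {1..d}"
    have "measure P {B. i \<in> B} = measure P {B. {i} \<subseteq> B}" by simp
    also have "\<dots> = \<rho> 0 * Q i + \<rho> 1 * (1 - Q i)" using key[of "{i}"] i by simp
    finally have m: "measure P {B. i \<in> B} = \<rho> 0 * Q i + \<rho> 1 * (1 - Q i)" .
    have e: "real d - real k = (real d - 1) - (real k - 1)" by simp
    have "(real d - real k) / (real d - 1) * Q i + (real k - 1) / (real d - 1)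
       = 1 * Q i + (real k - 1) / (real d - 1) * (1 - Q i)"
      unfolding e by (rule a1) (use dk in simp)
    then show "measure_pmf.prob P {B. i \<in> B}
        = (real d - real k) / (real d - 1) * qprob d w i + (real k - 1) / (real d - 1)"
      using m r0 r1 unfolding Q_def by simp
  qed
  have part2: "\<forall>i\<in>{1..d}. \<forall>j\<in>{1..d}. i \<noteq> j \<longrightarrow>
        measure_pmf.prob P {B. i \<in> B \<and> j \<in> B}
        = 1 / gdk d k + (real d - real k) / ((real k - 2) * gdk d k) * (qprob d w i + qprob d w j)"
  proof (intro ballI impI)
    fix i j assume ij: "i \<in> {1..d}" "j \<in> {1..d}" "i \<noteq> j"
    have "measure P {B. i \<in> B \<and> j \<in> B} = measure P {B. {i, j} \<subseteq> B}" by simp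
    also have "\<dots> = \<rho> 1 * (Q i + Q j) + \<rho> 2 * (1 - (Q i + Q j))" using key[of "{i, j}"] ij by (simp add: numeral_2_eq_2)
    finally have m: "measure P {B. i \<in> B \<and> j \<in> B} = \<rho> 1 * (Q i + Q j) + \<rho> 2 * (1 - (Q i + Q j))" .
    have e: "real d - real k = (real d - 2) - (real k - 2)" by simp
    have "1 / gdk d k + (real d - real k) / ((real k - 2) * gdk d k) * (Q i + Q j)
       = (real k - 1) / (real d - 1) * (Q i + Q j) + (real k - 1) / (real d - 1) * ((real k - 2) / (real d - 2)) * (1 - (Q i + Q j))"
      unfolding e gdk by (rule a2) (use dk in simp_all)
    then show "measure_pmf.prob P {B. i \<in> B \<and> j \<in> B}
        = 1 / gdk d k + (real d - real k) / ((real k - 2) * gdk d k) * (qprob d w i + qprob d w j)"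
      using m r1 r2 unfolding Q_def by simp
  qed
  have part3: "\<forall>i\<in>{1..d}. \<forall>j\<in>{1..d}. \<forall>r\<in>{1..d}. i \<noteq> j \<and> i \<noteq> r \<and> j \<noteq> r \<longrightarrow>
        measure_pmf.prob P {B. i \<in> B \<and> j \<in> B \<and> r \<in> B}
        = 1 / gdk d k * ((real k - 3) / (real d - 3))
          + 1 / gdk d k * ((real d - real k) / (real d - 3)) * (qprob d w i + qprob d w j + qprob d w r)"
  proof (intro ballI impI)
    fix i j r assume ij: "i \<in> {1..d}" "j \<in> {1..d}" "r \<in> {1..d}" "i \<noteq> j \<and> i \<noteq> r \<and> j \<noteq> r"
    have "measure P {B. i \<in> B \<and> j \<in> B \<and> r \<in> B} = measure P {B. {i, j, r} \<subseteq> B}" by simp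
    also have "\<dots> = \<rho> 2 * (Q i + Q j + Q r) + \<rho> 3 * (1 - (Q i + Q j + Q r))"
      using key[of "{i, j, r}"] ij by (simp add: algebra_simps numeral_3_eq_3 numeral_2_eq_2)
    finally have m: "measure P {B. i \<in> B \<and> j \<in> B \<and> r \<in> B} = \<rho> 2 * (Q i + Q j + Q r) + \<rho> 3 * (1 - (Q i + Q j + Q r))" .
    show "measure_pmf.prob P {B. i \<in> B \<and> j \<in> B \<and> r \<in> B}
        = 1 / gdk d k * ((real k - 3) / (real d - 3))
          + 1 / gdk d k * ((real d - real k) / (real d - 3)) * (qprob d w i + qprob d w j + qprob d w r)"
    proof -
      have e: "real d - real k = (real d - 3) - (real k - 3)" by simp
      have "1 / gdk d k * ((real k - 3) / (real d - 3))
          + 1 / gdk d k * ((real d - real k) / (real d - 3)) * (Q i + Q j + Q r)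
         = (real k - 1) / (real d - 1) * ((real k - 2) / (real d - 2)) * (Q i + Q j + Q r)
          + (real k - 1) / (real d - 1) * ((real k - 2) / (real d - 2)) * ((real k - 3) / (real d - 3)) * (1 - (Q i + Q j + Q r))"
        unfolding e gdk by (rule a3) (use dk in simp_all)
      then show ?thesis using m r2 r3 unfolding Q_def by simp
    qed
  qed
  have pos1: "measure P {B. i \<in> B} > 0" if "i \<in> {1..d}" for i
  proof -
    have "(real d - real k) / (real d - 1) * qprob d w i \<ge> 0"
      using dk Qnn[of i] unfolding Q_def by simp
    moreover have "(real k - 1) / (real d - 1) > 0" using dk by simp
    ultimately show ?thesis using part1 that by simp
  qed
  have pos2: "measure P {B. i \<in> B \<and> j \<in> B} > 0" if "i \<in> {1..d}" "j \<in> {1..d}" "i \<noteq> j" for i j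
  proof -
    have "(real d - real k) / ((real k - 2) * gdk d k) * (qprob d w i + qprob d w j) \<ge> 0"
      using dk Qnn[of i] Qnn[of j] unfolding Q_def gdk by simp
    moreover have "1 / gdk d k > 0" using dk unfolding gdk by simp
    moreover have "measure P {B. i \<in> B \<and> j \<in> B}
        = 1 / gdk d k + (real d - real k) / ((real k - 2) * gdk d k) * (qprob d w i + qprob d w j)"
      using part2 that by blast
    ultimately show ?thesis by linarith
  qed
  have part4: "\<forall>i\<in>{1..d}. measure_pmf.expectation P (\<lambda>B. xhat P x B i) = x i"
  proof
    fix i assume i: "i \<in> {1..d}"
    have f: "(\<lambda>B. xhat P x B i) = (\<lambda>B. indicator {C. i \<in> C} B * (x i / measure P {C. i \<in> C}))"
      unfolding xhat_def fun_eq_iff indicator_def by simp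
    have "measure_pmf.expectation P (\<lambda>B. xhat P x B i) = measure P {C. i \<in> C} * (x i / measure P {C. i \<in> C})"
      unfolding f by (rule ind)
    also have "\<dots> = x i" using pos1[OF i] by simp
    finally show "measure_pmf.expectation P (\<lambda>B. xhat P x B i) = x i" .
  qed
  have part5: "\<forall>i\<in>{1..d}. \<forall>j\<in>{1..d}. measure_pmf.expectation P (\<lambda>B. hmat P x B i j) = x i * x j"
  proof (intro ballI)
    fix i j assume ij: "i \<in> {1..d}" "j \<in> {1..d}"
    show "measure_pmf.expectation P (\<lambda>B. hmat P x B i j) = x i * x j"
    proof (cases "i = j")
      case True
      have f: "(\<lambda>B. hmat P x B i j) = (\<lambda>B. indicator {C. i \<in> C} B * (x i ^ 2 / measure P {C. i \<in> C}))"
        unfolding hmat_def fun_eq_iff indicator_def using True by simp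
      have "measure_pmf.expectation P (\<lambda>B. hmat P x B i j) = measure P {C. i \<in> C} * (x i ^ 2 / measure P {C. i \<in> C})"
        unfolding f by (rule ind)
      also have "\<dots> = x i * x j" using pos1[OF ij(1)] True by (simp add: power2_eq_square)
      finally show ?thesis .
    next
      case False
      have f: "(\<lambda>B. hmat P x B i j) = (\<lambda>B. indicator {C. i \<in> C \<and> j \<in> C} B * (x i * x j / measure P {C. i \<in> C \<and> j \<in> C}))"
        unfolding hmat_def fun_eq_iff indicator_def using False by simp
      have "measure_pmf.expectation P (\<lambda>B. hmat P x B i j) = measure P {C. i \<in> C \<and> j \<in> C} * (x i * x j / measure P {C. i \<in> C \<and> j \<in> C})"
        unfolding f by (rule ind)
      also have "\<dots> = x i * x j" using pos2[OF ij False] by simp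
      finally show ?thesis .
    qed
  qed
  show ?thesis by (intro conjI part1 part2 part3 part4 part5)
qed

end
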